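(* The groups $\left\{\begin{bmatrix}a&b\\0&1\end{bmatrix}: a,b\in\mathbb{R},\ a\neq0\right\}$ (i.e. $\mathbb{R}^*\ltimes\mathbb{R}$) and $\left\{\begin{bmatrix}a&b\\0&1\end{bmatrix}: a,b\in\mathbb{R},\ a>0\right\}$ (i.e. $\mathbb{R}\ltimes\mathbb{R}$), with their usual Lie group structures, have the topological $R_\infty$-property.
   Context: For an automorphism $\varphi$ of a group $G$, the $\varphi$-twisted conjugacy classes are the equivalence classes of the relation $x\sim_\varphi y$ iff $y=gx\varphi(g)^{-1}$ for some $g\in G$; $R(\varphi)\in\mathbb{N}\cup\{\infty\}$ is their number. A topological group $G$ has the topological $R_\infty$-property if $R(\varphi)=\infty$ for every automorphism $\varphi$ of $G$ that is a homeomorphism (for a Lie group: every continuous automorphism). *)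

theory Defs
  imports "HOL-Analysis.Analysis" "HOL-Algebra.Group"
begin

definition twisted_rel :: "('a, 'b) monoid_scheme \<Rightarrow> ('a \<Rightarrow> 'a) \<Rightarrow> ('a \<times> 'a) set" where
  "twisted_rel G \<phi> = {(x, y). x \<in> carrier G \<and> y \<in> carrier G \<and>
     (\<exists>g \<in> carrier G. y = g \<otimes>\<^bsub>G\<^esub> x \<otimes>\<^bsub>G\<^esub> inv\<^bsub>G\<^esub> (\<phi> g))}"

definition top_R_infty :: "('a, 'b) monoid_scheme \<Rightarrow> 'a topology \<Rightarrow> bool" where
  "top_R_infty G T \<longleftrightarrow>
     (\<forall>\<phi>. \<phi> \<in> iso G G \<and> homeomorphic_map T T \<phi> \<longrightarrow>
        infinite (carrier G // twisted_rel G \<phi>))"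

text \<open>Affine group: the pair (a,b) stands for the matrix [[a,b],[0,1]];
  matrix multiplication gives (a,b)(c,d) = (a c, a d + b).\<close>
definition aff_group :: "(real \<times> real) set \<Rightarrow> (real \<times> real) monoid" where
  "aff_group S = \<lparr>carrier = S,
     mult = (\<lambda>(a, b) (c, d). (a * c, a * d + b)),
     one = (1, 0)\<rparr>"

end

theory Submission imports Defs begin
lemma cauchy_cont:
  fixes f :: "real \<Rightarrow> real"
  assumes add: "\<And>x y. f (x + y) = f x + f y" and cont: "continuous_on UNIV f"
  shows "f x = x * f 1"
proof -
  have f0: "f 0 = 0" using add[of 0 0] by simp
  have fneg: "f (- y) = - f y" for y using add[of y "-y"] f0 by simp
  have fnat: "f (real n * y) = real n * f y" for n y
    by (induction n) (auto simp: f0 distrib_right add)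
  have fint: "f (real_of_int m * y) = real_of_int m * f y" for m y
  proof (cases "m \<ge> 0")
    case True then show ?thesis using fnat[of "nat m" y] by simp
  next
    case False then show ?thesis using fnat[of "nat (-m)" y] fneg[of "real (nat (-m)) * y"] by simp
  qed
  have rat: "f q = q * f 1" if "q \<in> \<rat>" for q
  proof -
    from that obtain m n where q: "q = real_of_int m / real n" and n: "n > 0"
      by (auto elim!: Rats_cases' simp: of_int_of_nat_eq) (metis of_int_of_nat_eq zero_less_imp_eq_int)
    have "real n * f q = f (real n * q)" by (simp add: fnat)
    also have "real n * q = real_of_int m * 1" using q n by simp
    also have "f \<dots> = real_of_int m * f 1" by (rule fint)
    finally have e: "real n * f q = real_of_int m * f 1" .
    have qn: "real n * q = real_of_int m" using q n by simp
    have "real n * (q * f 1) = real_of_int m * f 1" by (metis qn mult.assoc)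
    then have "real n * f q = real n * (q * f 1)" using e by metis
    then show ?thesis using n by simp
  qed
  have "closed {x. f x = x * f 1}"
    using closed_Collect_eq[OF cont continuous_on_mult[OF continuous_on_id continuous_on_const]] by simp
  then have "closure \<rat> \<subseteq> {x. f x = x * f 1}"
    by (rule closure_minimal[rotated]) (use rat in blast)
  then show ?thesis unfolding Rats_closure_real by blast
qed
lemma aff_carrier[simp]: "carrier (aff_group S) = S" by (simp add: aff_group_def)
lemma aff_mult[simp]: "(a, b) \<otimes>\<^bsub>aff_group S\<^esub> (c, d) = (a * c, a * d + b)" by (simp add: aff_group_def)
lemma aff_mult': "x \<otimes>\<^bsub>aff_group S\<^esub> y = (fst x * fst y, fst x * snd y + snd x)"
  by (cases x; cases y) simp
lemma aff_one[simp]: "\<one>\<^bsub>aff_group S\<^esub> = (1, 0)" by (simp add: aff_group_def)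

lemma main:
  fixes P :: "real \<Rightarrow> bool"
  assumes P1: "P 1" and P2: "P 2" and Ph: "P (1/2)"
    and Pmul: "\<And>a b. P a \<Longrightarrow> P b \<Longrightarrow> P (a*b)"
    and Pinv: "\<And>a. P a \<Longrightarrow> P (1/a)" and Pnz: "\<And>a. P a \<Longrightarrow> a \<noteq> 0"
    and Pinf: "infinite {a. P a}"
  shows "top_R_infty (aff_group {(a,b). P a}) (top_of_set {(a,b). P a})"
  unfolding top_R_infty_def
proof (intro allI impI)
  let ?C = "{(a::real,b::real). P a}"
  let ?G = "aff_group ?C"
  fix \<phi> assume A: "\<phi> \<in> iso ?G ?G \<and> homeomorphic_map (top_of_set ?C) (top_of_set ?C) \<phi>"
  have grp: "group ?G"
  proof (rule groupI)
    fix x y assume "x \<in> carrier ?G" "y \<in> carrier ?G"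
    then show "x \<otimes>\<^bsub>?G\<^esub> y \<in> carrier ?G" by (auto simp: Pmul)
  next
    show "\<one>\<^bsub>?G\<^esub> \<in> carrier ?G" using P1 by simp
  next
    fix x y z assume "x \<in> carrier ?G" "y \<in> carrier ?G" "z \<in> carrier ?G"
    then show "x \<otimes>\<^bsub>?G\<^esub> y \<otimes>\<^bsub>?G\<^esub> z = x \<otimes>\<^bsub>?G\<^esub> (y \<otimes>\<^bsub>?G\<^esub> z)"
      by (cases x; cases y; cases z) (simp add: algebra_simps)
  next
    fix x assume "x \<in> carrier ?G" then show "\<one>\<^bsub>?G\<^esub> \<otimes>\<^bsub>?G\<^esub> x = x" by (cases x) simp
  next
    fix x assume x: "x \<in> carrier ?G"
    obtain a b where ab: "x = (a, b)" by (cases x)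
    with x have "P a" by simp
    then have "(1/a, - b/a) \<in> carrier ?G \<and> (1/a, - b/a) \<otimes>\<^bsub>?G\<^esub> x = \<one>\<^bsub>?G\<^esub>"
      using Pinv Pnz ab by (simp add: field_simps)
    then show "\<exists>y\<in>carrier ?G. y \<otimes>\<^bsub>?G\<^esub> x = \<one>\<^bsub>?G\<^esub>" by blast
  qed
  have hom: "\<phi> \<in> hom ?G ?G" and bij: "bij_betw \<phi> ?C ?C" using A by (auto simp: iso_def)
  have phiC: "\<phi> g \<in> ?C" if "g \<in> ?C" for g proof -
    have "\<phi> \<in> carrier ?G \<rightarrow> carrier ?G" using hom unfolding hom_def by blast
    then show ?thesis using that by (simp only: aff_carrier Pi_iff)
  qed
  have inC: "P (fst (\<phi> (a, b)))" if "P a" for a b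
    using phiC[of "(a,b)"] that by (cases "\<phi> (a,b)") auto
  define h where "h x = fst (\<phi> x)" for x
  define k where "k x = snd (\<phi> x)" for x
  have hnz: "h (a, b) \<noteq> 0" if "P a" for a b using inC[OF that] Pnz h_def by auto
  have hm: "\<phi> (a*c, a*d+b) = (h (a,b) * h (c,d), h (a,b) * k (c,d) + k (a,b))"
    if "P a" "P c" for a b c d
  proof -
    have "\<phi> ((a,b) \<otimes>\<^bsub>?G\<^esub> (c,d)) = \<phi> (a,b) \<otimes>\<^bsub>?G\<^esub> \<phi> (c,d)"
      using hom that unfolding hom_def by auto
    then show ?thesis by (simp add: h_def k_def aff_mult')
  qed
  have hmh: "h (a*c, a*d+b) = h (a,b) * h (c,d)" if "P a" "P c" for a b c d
    using hm[OF that] by (simp add: h_def)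
  have hmk: "k (a*c, a*d+b) = h (a,b) * k (c,d) + k (a,b)" if "P a" "P c" for a b c d
    using hm[OF that] by (simp add: k_def)
  have h10: "h (1,0) = 1"
    using hmh[OF P1 P1, where b=0 and d=0] hnz[OF P1, of 0] by simp
  have k10: "k (1,0) = 0"
    using hmk[OF P1 P1, where b=0 and d=0] h10 by simp
  have hinv: "h (1, b) * h (1, -b) = 1" for b
    using hmh[OF P1 P1, where b=b and d="-b"] h10 by simp
  have h1: "h (1, b) = 1" for b
  proof -
    have e1: "h (2, 2*b) = h (2,0) * h (1,b)" using hmh[OF P2 P1, where b=0 and d=b] by simp
    have e2: "h (1, 2*b) = h (2, 2*b) * h (1/2, 0)" using hmh[OF P2 Ph, where b="2*b" and d=0] by simp
    have e3: "h (1, b) = h (1, 2*b) * h (1, -b)" using hmh[OF P1 P1, where b="2*b" and d="-b"] by simp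
    have e4: "h (2, 0) * h (1/2, 0) = 1" using hmh[OF P2 Ph, where b=0 and d=0] h10 by simp
    have "h (1, b) = h (1, b) * h (1, -b)" using e1 e2 e3 e4
      by (metis mult.assoc mult.commute mult.right_neutral)
    then have "h (1, -b) = 1" using hnz[OF P1, of b] by simp
    then show ?thesis using hnz[OF P1, of "-b"] by (metis hinv mult.right_neutral)
  qed
  define f where "f b = k (1, b)" for b
  have fadd: "f (x + y) = f x + f y" for x y
    using hmk[OF P1 P1, where b=x and d=y] h1 by (simp add: f_def add.commute)
  have cont: "continuous_on ?C \<phi>"
    using homeomorphic_imp_continuous_map[of "top_of_set ?C" "top_of_set ?C" \<phi>] A by simp
  have fcont: "continuous_on UNIV f"
  proof -
    have "continuous_on UNIV (\<lambda>b::real. (1::real, b))" by (intro continuous_intros)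
    moreover have "(\<lambda>b::real. (1::real, b)) ` UNIV \<subseteq> ?C" using P1 by auto
    ultimately have "continuous_on UNIV (\<phi> \<circ> (\<lambda>b::real. (1::real, b)))"
      using continuous_on_compose continuous_on_subset cont by blast
    then have "continuous_on UNIV (snd \<circ> (\<phi> \<circ> (\<lambda>b::real. (1::real, b))))"
      using continuous_on_compose continuous_on_snd continuous_on_id by blast
    then show ?thesis by (simp add: f_def k_def o_def)
  qed
  have flin: "f x = x * f 1" for x by (rule cauchy_cont[OF fadd fcont])
  have f1: "f 1 \<noteq> 0"
  proof
    assume "f 1 = 0"
    then have "\<phi> (1, 1) = \<phi> (1, 0)"
      using h1[of 1] h10 k10 by (simp add: f_def h_def k_def prod_eq_iff)
    moreover have "inj_on \<phi> ?C" using bij bij_betw_def by blast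
    ultimately show False using P1 unfolding inj_on_def by fastforce
  qed
  have ha0: "h (a, 0) = a" if "P a" for a
  proof -
    have "h (a, 0) * k (1, 1) + k (a, 0) = 1 * k (a, 0) + k (1, a)"
      using hmk[OF that P1, where b=0 and d=1] hmk[OF P1 that, where b=a and d=0] h1 by simp
    then have "h (a, 0) * f 1 = f a" by (simp add: f_def)
    then show ?thesis using flin[of a] f1 by simp
  qed
  have hab: "h (a, b) = a" if "P a" for a b
    using hmh[OF P1 that, where b=b and d=0] h1 ha0[OF that] by simp
  let ?R = "twisted_rel ?G \<phi>"
  have inv_fst: "fst (inv\<^bsub>?G\<^esub> y) * fst y = 1" if "y \<in> ?C" for y
  proof -
    have "inv\<^bsub>?G\<^esub> y \<otimes>\<^bsub>?G\<^esub> y = \<one>\<^bsub>?G\<^esub>" using group.l_inv[OF grp] that by simp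
    then show ?thesis by (cases "inv\<^bsub>?G\<^esub> y"; cases y) simp
  qed
  have inv: "fst y = fst x" if "(x, y) \<in> ?R" for x y
  proof -
    from that obtain g where g: "g \<in> ?C" and x: "x \<in> ?C" and
      y: "y = g \<otimes>\<^bsub>?G\<^esub> x \<otimes>\<^bsub>?G\<^esub> inv\<^bsub>?G\<^esub> (\<phi> g)"
      unfolding twisted_rel_def by auto
    have hg: "fst (\<phi> g) = fst g" using hab g h_def by (cases g) auto
    have "fst y = fst g * fst x * fst (inv\<^bsub>?G\<^esub> (\<phi> g))"
      using y by (cases g; cases x; cases "inv\<^bsub>?G\<^esub> (\<phi> g)") simp
    also have "\<dots> = fst x * (fst (inv\<^bsub>?G\<^esub> (\<phi> g)) * fst (\<phi> g))" using hg by simp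
    also have "\<dots> = fst x" using inv_fst[OF phiC[OF g]] by simp
    finally show ?thesis .
  qed
  have refl: "(x, x) \<in> ?R" if "x \<in> ?C" for x
  proof -
    have p10: "\<phi> (1, 0) = (1, 0)" using h10 k10 by (simp add: h_def k_def prod_eq_iff)
    have "x = (1,0) \<otimes>\<^bsub>?G\<^esub> x \<otimes>\<^bsub>?G\<^esub> inv\<^bsub>?G\<^esub> (\<phi> (1,0))"
    proof -
      have i1: "inv\<^bsub>?G\<^esub> (1,0) = (1,0)" using monoid.inv_one[OF group.is_monoid[OF grp]] by simp
      show ?thesis using p10 i1 that by (cases x) simp
    qed
    then show ?thesis unfolding twisted_rel_def using that P1 by auto
  qed
  define F where "F a = ?R `` {(a, 0)}" for a
  have "inj_on F {a. P a}"
  proof (rule inj_onI)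
    fix a a' assume "a \<in> {a. P a}" "a' \<in> {a. P a}" "F a = F a'"
    then have "((a, 0), (a', 0)) \<in> ?R" using refl[of "(a', 0)"] by (auto simp: F_def)
    then show "a = a'" using inv by fastforce
  qed
  moreover have "F ` {a. P a} \<subseteq> carrier ?G // ?R"
    unfolding F_def quotient_def by auto
  ultimately show "infinite (carrier ?G // ?R)"
    using Pinf finite_imageD finite_subset by blast
qed

theorem corollary5p2:
  shows "top_R_infty (aff_group {(a, b). a \<noteq> 0}) (top_of_set {(a, b). a \<noteq> 0})
       \<and> top_R_infty (aff_group {(a, b). a > 0}) (top_of_set {(a, b). a > 0})"
proof
  have "infinite {a::real. a \<noteq> 0}"
  proof
    assume "finite {a::real. a \<noteq> 0}"
    then have "finite ({a::real. a \<noteq> 0} \<union> {0})" by simp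
    moreover have "{a::real. a \<noteq> 0} \<union> {0} = UNIV" by auto
    ultimately show False using infinite_UNIV_char_0 by metis
  qed
  then show "top_R_infty (aff_group {(a, b). a \<noteq> 0}) (top_of_set {(a, b). a \<noteq> 0})"
    using main[of "\<lambda>a. a \<noteq> 0"] by simp
next
  have "infinite {a::real. a > 0}"
    using infinite_Ioi[of "0::real"] by (simp add: greaterThan_def)
  then show "top_R_infty (aff_group {(a, b). a > 0}) (top_of_set {(a, b). a > (0::real)})"
    using main[of "\<lambda>a. a > 0"] by simp
qed

end
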